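(* Assume (H1). For every integer $h\ge1$, $N_1(\mathcal{M}^{(h)})$ and $N_2(\mathcal{M}^{(h)})$ have the same law, and there exist $c_1>0,c_2>0$ such that for all $h$, $$\mathbb{P}(\mathcal{M}^{(h)}\notin J_h)\le c_1\exp(-c_2h^{1/3}).$$
   Context: (H1): $\mu=(\mu_k)_{k\ge0}$ probability on $\mathbb{N}$ with $\mu_0+\mu_1\ne1$, $\sum_kk\mu_k=1$, $\sum_{k\le K}\mu_k=1$ for some integer $K>0$; $\sigma_\mu^2$ is its variance. $I_K=\{(k,j):1\le j\le k\le K\}$; $\mathcal{M}^{(h)}$ is multinomial with parameters $h$ and $(p_{k,j})_{(k,j)\in I_K}$, $p_{k,j}=\mu_k$. $\mathbb{N}^I[h]=\{c\in\mathbb{N}^{I_K}:\sum c_i=h\}$. For $\mathbf{a}\in\mathbb{R}^{I_K}$, $N_1(\mathbf{a})=\sum(j-1)\mathbf{a}_{k,j}$, $N_2(\mathbf{a})=\sum(k-j)\mathbf{a}_{k,j}$. $J_h=\{\mathbf{a}\in\mathbb{N}^I[h]:(N_1(\mathbf{a}),N_2(\mathbf{a}))\in[\tfrac{\sigma_\mu^2}{2}h-h^{2/3},\tfrac{\sigma_\mu^2}{2}h+h^{2/3}]^2\}$. *)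

theory Defs
  imports "HOL-Probability.Probability"
begin

definition IK :: "nat \<Rightarrow> (nat \<times> nat) set" where
  "IK K = {(k, j). 1 \<le> j \<and> j \<le> k \<and> k \<le> K}"

definition H1 :: "(nat \<Rightarrow> real) \<Rightarrow> nat \<Rightarrow> bool" where
  "H1 \<mu> K \<longleftrightarrow> 0 < K \<and> (\<forall>k. 0 \<le> \<mu> k) \<and> (\<forall>k>K. \<mu> k = 0)
     \<and> (\<Sum>k\<le>K. \<mu> k) = 1 \<and> (\<Sum>k\<le>K. real k * \<mu> k) = 1 \<and> \<mu> 0 + \<mu> 1 \<noteq> 1"

text \<open>Variance of mu (mean is 1).\<close>
definition sigma2 :: "(nat \<Rightarrow> real) \<Rightarrow> nat \<Rightarrow> real" where
  "sigma2 \<mu> K = (\<Sum>k\<le>K. (real k - 1)^2 * \<mu> k)"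

text \<open>Categorical law on I_K with p_{k,j} = mu_k (a probability under H1).\<close>
definition cat_IK :: "(nat \<Rightarrow> real) \<Rightarrow> nat \<Rightarrow> (nat \<times> nat) pmf" where
  "cat_IK \<mu> K = embed_pmf (\<lambda>(k, j). if (k, j) \<in> IK K then \<mu> k else 0)"

text \<open>Multinomial law M^(h) with parameters h and (p_{k,j}): counts of h i.i.d. draws.\<close>
fun multinom :: "(nat \<Rightarrow> real) \<Rightarrow> nat \<Rightarrow> nat \<Rightarrow> ((nat \<times> nat) \<Rightarrow> nat) pmf" where
  "multinom \<mu> K 0 = return_pmf (\<lambda>_. 0)"
| "multinom \<mu> K (Suc h) =
     bind_pmf (multinom \<mu> K h) (\<lambda>c. map_pmf (\<lambda>i. c(i := c i + 1)) (cat_IK \<mu> K))"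

definition N1 :: "nat \<Rightarrow> ((nat \<times> nat) \<Rightarrow> 'a::real_vector) \<Rightarrow> 'a" where
  "N1 K a = (\<Sum>(k, j)\<in>IK K. (real j - 1) *\<^sub>R a (k, j))"

definition N2 :: "nat \<Rightarrow> ((nat \<times> nat) \<Rightarrow> 'a::real_vector) \<Rightarrow> 'a" where
  "N2 K a = (\<Sum>(k, j)\<in>IK K. (real k - real j) *\<^sub>R a (k, j))"

definition NI :: "nat \<Rightarrow> nat \<Rightarrow> ((nat \<times> nat) \<Rightarrow> nat) set" where
  "NI K h = {c. (\<forall>i. i \<notin> IK K \<longrightarrow> c i = 0) \<and> (\<Sum>i\<in>IK K. c i) = h}"

definition J :: "(nat \<Rightarrow> real) \<Rightarrow> nat \<Rightarrow> nat \<Rightarrow> ((nat \<times> nat) \<Rightarrow> nat) set" where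
  "J \<mu> K h = {a \<in> NI K h.
     let lo = sigma2 \<mu> K / 2 * real h - real h powr (2/3);
         hi = sigma2 \<mu> K / 2 * real h + real h powr (2/3)
     in N1 K (real \<circ> a) \<in> {lo..hi} \<and> N2 K (real \<circ> a) \<in> {lo..hi}}"

end

theory Submission imports Defs begin

lemma IK_eq: "IK K = Sigma {1..K} (\<lambda>k. {1..k})"
  by (auto simp: IK_def)

lemma finite_IK: "finite (IK K)"
  by (simp add: IK_eq)

lemma sum_IK: "(\<Sum>(k,j)\<in>IK K. f k j) = (\<Sum>k=1..K. \<Sum>j=1..k. f k j)"
  unfolding IK_eq by (simp add: sum.Sigma)

lemma sumj1: "(\<Sum>j=1..k. real j - 1) = real k * (real k - 1) / 2"
  by (induction k) (auto simp: field_simps)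

lemma sumj2: "(\<Sum>j=1..k. real k - real j) = real k * (real k - 1) / 2"
proof (induction k)
  case (Suc k)
  have "(\<Sum>j=1..Suc k. real (Suc k) - real j) = (\<Sum>j=1..k. real (Suc k) - real j) + 0"
    by simp
  also have "(\<Sum>j=1..k. real (Suc k) - real j) = (\<Sum>j=1..k. (real k - real j) + 1)"
    by (intro sum.cong) auto
  also have "\<dots> = (\<Sum>j=1..k. real k - real j) + real k"
    by (simp add: sum.distrib)
  also have "\<dots> = real k * (real k - 1) / 2 + real k"
    by (simp only: Suc.IH)
  finally show ?case by (simp add: field_simps)
qed simp

lemma H1_K: assumes "H1 \<mu> K" shows "K \<ge> 2"
proof (rule ccontr)
  assume "\<not> K \<ge> 2"
  moreover have "K > 0" using assms by (simp add: H1_def)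
  ultimately have K: "K = 1" by simp
  have "(\<Sum>k\<le>K. real k * \<mu> k) = 1" using assms by (simp add: H1_def)
  hence "\<mu> 1 = 1" using K by simp
  moreover have "\<mu> 0 + \<mu> 1 = 1" using assms K by (simp add: H1_def)
  ultimately show False using assms by (simp add: H1_def)
qed

lemma cat_prob:
  assumes "H1 \<mu> K"
  shows "(\<integral>\<^sup>+x. ennreal ((\<lambda>(k, j). if (k, j) \<in> IK K then \<mu> k else 0) x) \<partial>count_space UNIV) = 1"
proof -
  have "(\<integral>\<^sup>+x. ennreal ((\<lambda>(k, j). if (k, j) \<in> IK K then \<mu> k else 0) x) \<partial>count_space UNIV)
     = (\<Sum>x\<in>IK K. ennreal ((\<lambda>(k, j). if (k, j) \<in> IK K then \<mu> k else 0) x))"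
    by (rule nn_integral_count_space') (auto simp: finite_IK)
  also have "\<dots> = ennreal (\<Sum>x\<in>IK K. (\<lambda>(k, j). if (k, j) \<in> IK K then \<mu> k else 0) x)"
    using assms by (intro sum_ennreal) (auto simp: H1_def)
  also have "(\<Sum>x\<in>IK K. (\<lambda>(k, j). if (k, j) \<in> IK K then \<mu> k else 0) x) = (\<Sum>(k,j)\<in>IK K. \<mu> k)"
    by (intro sum.cong) auto
  also have "\<dots> = (\<Sum>k=1..K. real k * \<mu> k)" by (simp add: sum_IK)
  also have "\<dots> = (\<Sum>k\<le>K. real k * \<mu> k)"
    by (rule sum.mono_neutral_left) auto
  also have "\<dots> = 1" using assms by (simp add: H1_def)
  finally show ?thesis by simp
qed

lemma pmf_cat:
  assumes "H1 \<mu> K"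
  shows "pmf (cat_IK \<mu> K) x = (\<lambda>(k, j). if (k, j) \<in> IK K then \<mu> k else 0) x"
  unfolding cat_IK_def
  by (rule pmf_embed_pmf[OF _ cat_prob[OF assms]]) (use assms in \<open>auto simp: H1_def\<close>)

lemma set_cat:
  assumes "H1 \<mu> K"
  shows "set_pmf (cat_IK \<mu> K) \<subseteq> IK K"
  using pmf_cat[OF assms] by (auto simp: set_pmf_eq split: if_splits)

definition sig :: "nat \<Rightarrow> nat \<times> nat \<Rightarrow> nat \<times> nat" where
  "sig K x = (if x \<in> IK K then (fst x, fst x + 1 - snd x) else x)"

lemma sig_IK: "x \<in> IK K \<Longrightarrow> sig K x \<in> IK K"
  by (cases x) (auto simp: sig_def IK_def)

lemma sig_sig[simp]: "sig K (sig K x) = x"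
  by (cases x) (auto simp: sig_def IK_def)

lemma inj_sig: "inj (sig K)"
  by (metis injI sig_sig)

lemma map_sig_cat:
  assumes "H1 \<mu> K"
  shows "map_pmf (sig K) (cat_IK \<mu> K) = cat_IK \<mu> K"
proof (rule pmf_eqI)
  fix x
  have "pmf (map_pmf (sig K) (cat_IK \<mu> K)) (sig K (sig K x)) = pmf (cat_IK \<mu> K) (sig K x)"
    by (rule pmf_map_inj'[OF inj_sig])
  also have "\<dots> = pmf (cat_IK \<mu> K) x"
    unfolding pmf_cat[OF assms]
    by (cases x) (auto simp: sig_def IK_def)
  finally show "pmf (map_pmf (sig K) (cat_IK \<mu> K)) x = pmf (cat_IK \<mu> K) x" by simp
qed

lemma N2_sig: "N2 K (real \<circ> c) = N1 K (real \<circ> (c \<circ> sig K))"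
  unfolding N1_def N2_def
proof (rule sum.reindex_bij_witness[of _ "sig K" "sig K"])
  fix a assume "a \<in> IK K"
  thus "sig K (sig K a) = a" "sig K a \<in> IK K" by (auto simp: sig_IK)
  show "(case sig K a of (k, j) \<Rightarrow> (real j - 1) *\<^sub>R (real \<circ> (c \<circ> sig K)) (k, j)) =
         (case a of (k, j) \<Rightarrow> (real k - real j) *\<^sub>R (real \<circ> c) (k, j))"
    using \<open>a \<in> IK K\<close> by (cases a) (auto simp: sig_def IK_def of_nat_diff)
qed (auto simp: sig_IK)

lemma sig_eq_iff: "sig K x = y \<longleftrightarrow> x = sig K y"
  by (metis sig_sig)

lemma upd_sig: "(c(i := Suc (c i))) \<circ> sig K = (c \<circ> sig K)(sig K i := Suc (c i))"
  by (rule ext) (auto simp: o_def sig_eq_iff)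

lemma multinom_sig:
  assumes "H1 \<mu> K"
  shows "map_pmf (\<lambda>c. c \<circ> sig K) (multinom \<mu> K h) = multinom \<mu> K h"
proof (induction h)
  case 0 thus ?case by (simp add: o_def)
next
  case (Suc h)
  have "map_pmf (\<lambda>c. c \<circ> sig K) (multinom \<mu> K (Suc h))
     = bind_pmf (multinom \<mu> K h) (\<lambda>c. map_pmf (\<lambda>i. (c(i := c i + 1)) \<circ> sig K) (cat_IK \<mu> K))"
    by (simp add: map_bind_pmf map_pmf_comp)
  also have "\<dots> = bind_pmf (multinom \<mu> K h) (\<lambda>c. map_pmf (\<lambda>i. (c \<circ> sig K)(i := (c \<circ> sig K) i + 1)) (map_pmf (sig K) (cat_IK \<mu> K)))"
    by (simp add: upd_sig map_pmf_comp)
  also have "\<dots> = bind_pmf (map_pmf (\<lambda>c. c \<circ> sig K) (multinom \<mu> K h)) (\<lambda>c. map_pmf (\<lambda>i. c(i := c i + 1)) (cat_IK \<mu> K))"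
    by (simp add: map_sig_cat[OF assms] bind_map_pmf)
  also have "\<dots> = multinom \<mu> K (Suc h)" by (simp add: Suc.IH)
  finally show ?case .
qed

lemma law_eq:
  assumes "H1 \<mu> K"
  shows "map_pmf (\<lambda>c. N1 K (real \<circ> c)) (multinom \<mu> K h)
                  = map_pmf (\<lambda>c. N2 K (real \<circ> c)) (multinom \<mu> K h)"
proof -
  have "map_pmf (\<lambda>c. N2 K (real \<circ> c)) (multinom \<mu> K h)
      = map_pmf (\<lambda>c. N1 K (real \<circ> c)) (map_pmf (\<lambda>c. c \<circ> sig K) (multinom \<mu> K h))"
    by (simp add: N2_sig map_pmf_comp o_assoc)
  thus ?thesis by (simp add: multinom_sig[OF assms])
qed

lemma mgf_bound:
  fixes p :: "'x pmf" and Q :: "nat \<Rightarrow> 'c pmf" and upd :: "'c \<Rightarrow> 'x \<Rightarrow> 'c"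
    and g :: "'c \<Rightarrow> real" and F :: "'x \<Rightarrow> real" and a b l :: real
  assumes QS: "\<And>h. Q (Suc h) = bind_pmf (Q h) (\<lambda>c. map_pmf (upd c) p)"
    and Q0: "Q 0 = return_pmf cz" and g0: "g cz = 0"
    and gupd: "\<And>c i. i \<in> set_pmf p \<Longrightarrow> g (upd c i) = g c + F i"
    and bnd: "\<And>i. i \<in> set_pmf p \<Longrightarrow> F i \<in> {a..b}"
    and l: "l > 0"
  shows "(\<integral>\<^sup>+c. ennreal (exp (l * (g c - real h * (\<integral>x. F x \<partial>p)))) \<partial>Q h)
          \<le> ennreal (exp (real h * (l\<^sup>2 * (b - a)\<^sup>2 / 8)))"
proof (induction h)
  case 0
  show ?case by (simp add: Q0 g0)
next
  case (Suc h)
  define m where "m = (\<integral>x. F x \<partial>p)"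
  define D where "D = l\<^sup>2 * (b - a)\<^sup>2 / 8"
  interpret ib: interval_bounded_random_variable "measure_pmf p" F a b
    by unfold_locales (use bnd in \<open>auto simp: AE_measure_pmf_iff\<close>)
  have E: "(\<integral>\<^sup>+i. ennreal (exp (l * (F i - m))) \<partial>p) \<le> ennreal (exp D)"
    unfolding m_def D_def by (rule ib.Hoeffdings_lemma_nn_integral[OF l])
  have "(\<integral>\<^sup>+c. ennreal (exp (l * (g c - real (Suc h) * m))) \<partial>Q (Suc h))
      = (\<integral>\<^sup>+c. \<integral>\<^sup>+i. ennreal (exp (l * (g (upd c i) - real (Suc h) * m))) \<partial>p \<partial>Q h)"
    by (simp add: QS)
  also have "\<dots> = (\<integral>\<^sup>+c. \<integral>\<^sup>+i. ennreal (exp (l * (g c - real h * m))) * ennreal (exp (l * (F i - m))) \<partial>p \<partial>Q h)"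
  proof (rule nn_integral_cong, rule nn_integral_cong_AE)
    fix c
    show "AE i in measure_pmf p. ennreal (exp (l * (g (upd c i) - real (Suc h) * m))) =
            ennreal (exp (l * (g c - real h * m))) * ennreal (exp (l * (F i - m)))"
      unfolding AE_measure_pmf_iff
    proof
      fix i assume "i \<in> set_pmf p"
      hence "l * (g (upd c i) - real (Suc h) * m) = l * (g c - real h * m) + l * (F i - m)"
        by (simp add: gupd algebra_simps)
      thus "ennreal (exp (l * (g (upd c i) - real (Suc h) * m))) =
            ennreal (exp (l * (g c - real h * m))) * ennreal (exp (l * (F i - m)))"
        by (simp add: exp_add ennreal_mult)
    qed
  qed
  also have "\<dots> = (\<integral>\<^sup>+c. ennreal (exp (l * (g c - real h * m))) * \<integral>\<^sup>+i. ennreal (exp (l * (F i - m))) \<partial>p \<partial>Q h)"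
    by (simp add: nn_integral_cmult)
  also have "\<dots> \<le> (\<integral>\<^sup>+c. ennreal (exp (l * (g c - real h * m))) * ennreal (exp D) \<partial>Q h)"
    by (intro nn_integral_mono mult_left_mono E) auto
  also have "\<dots> = (\<integral>\<^sup>+c. ennreal (exp (l * (g c - real h * m))) \<partial>Q h) * ennreal (exp D)"
    by (simp add: nn_integral_multc)
  also have "\<dots> \<le> ennreal (exp (real h * D)) * ennreal (exp D)"
    by (intro mult_right_mono) (use Suc.IH in \<open>auto simp: m_def D_def\<close>)
  also have "\<dots> = ennreal (exp (real (Suc h) * D))"
    by (simp add: ennreal_mult[symmetric] exp_add[symmetric] algebra_simps)
  finally show ?case by (simp add: m_def D_def)
qed

lemma tail_bound:
  fixes p :: "'x pmf" and Q :: "nat \<Rightarrow> 'c pmf" and upd :: "'c \<Rightarrow> 'x \<Rightarrow> 'c"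
    and g :: "'c \<Rightarrow> real" and F :: "'x \<Rightarrow> real" and a b \<epsilon> :: real
  assumes QS: "\<And>h. Q (Suc h) = bind_pmf (Q h) (\<lambda>c. map_pmf (upd c) p)"
    and Q0: "Q 0 = return_pmf cz" and g0: "g cz = 0"
    and gupd: "\<And>c i. i \<in> set_pmf p \<Longrightarrow> g (upd c i) = g c + F i"
    and bnd: "\<And>i. i \<in> set_pmf p \<Longrightarrow> F i \<in> {a..b}"
    and ab: "a < b" and h: "h > 0" and eps: "\<epsilon> > 0"
  shows "measure_pmf.prob (Q h) {c. g c \<ge> real h * (\<integral>x. F x \<partial>p) + \<epsilon>}
          \<le> exp (-2 * \<epsilon>\<^sup>2 / (real h * (b - a)\<^sup>2))"
proof -
  define m where "m = (\<integral>x. F x \<partial>p)"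
  define d where "d = real h * (b - a)\<^sup>2"
  have d: "d > 0" using ab h by (simp add: d_def)
  define l where "l = 4 * \<epsilon> / d"
  have l: "l > 0" using d eps by (simp add: l_def)
  have "ennreal (measure_pmf.prob (Q h) {c. g c \<ge> real h * m + \<epsilon>})
      = emeasure (measure_pmf (Q h)) {x\<in>UNIV. (g x - real h * m) \<ge> \<epsilon>}"
    by (simp add: measure_pmf.emeasure_eq_measure algebra_simps)
  also have "\<dots> \<le> ennreal (exp (-l * \<epsilon>)) * (\<integral>\<^sup>+x. ennreal (exp (l * (g x - real h * m))) * indicator UNIV x \<partial>measure_pmf (Q h))"
    by (rule Chernoff_ineq_nn_integral_ge[OF l]) auto
  also have "\<dots> = ennreal (exp (-l * \<epsilon>)) * (\<integral>\<^sup>+x. ennreal (exp (l * (g x - real h * m))) \<partial>measure_pmf (Q h))"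
    by simp
  also have "\<dots> \<le> ennreal (exp (-l * \<epsilon>)) * ennreal (exp (real h * (l\<^sup>2 * (b - a)\<^sup>2 / 8)))"
    unfolding m_def
    by (intro mult_left_mono mgf_bound[OF QS Q0 g0 gupd bnd l]) auto
  also have "\<dots> = ennreal (exp (-l * \<epsilon> + real h * (l\<^sup>2 * (b - a)\<^sup>2 / 8)))"
    by (simp add: ennreal_mult[symmetric] exp_add[symmetric])
  also have "-l * \<epsilon> + real h * (l\<^sup>2 * (b - a)\<^sup>2 / 8) = -2 * \<epsilon>\<^sup>2 / d"
  proof -
    have 1: "real h * (l\<^sup>2 * (b - a)\<^sup>2 / 8) = l\<^sup>2 * d / 8" by (simp add: d_def algebra_simps)
    have 2: "l\<^sup>2 * d / 8 = 2 * \<epsilon>\<^sup>2 / d" using d by (simp add: l_def power2_eq_square field_simps)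
    have 3: "l * \<epsilon> = 4 * \<epsilon>\<^sup>2 / d" using d by (simp add: l_def power2_eq_square field_simps)
    have 4: "-2 * \<epsilon>\<^sup>2 / d = - 2 * (\<epsilon>\<^sup>2 / d)" "4 * \<epsilon>\<^sup>2 / d = 4 * (\<epsilon>\<^sup>2 / d)" "2 * \<epsilon>\<^sup>2 / d = 2 * (\<epsilon>\<^sup>2 / d)" by simp_all
    have 5: "-l * \<epsilon> = - (l * \<epsilon>)" by simp
    show ?thesis unfolding 5 using 1 2 3 4 by linarith
  qed
  finally show ?thesis
    by (subst (asm) ennreal_le_iff) (simp_all add: d_def m_def)
qed

lemma upd_eq: "(\<lambda>x. real ((c(i := Suc (c i))) x)) = (\<lambda>x. real (c x) + (if x = i then 1 else 0))"
  by (rule ext) auto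

lemma sum_upd:
  assumes "i \<in> IK K"
  shows "(\<Sum>(k,j)\<in>IK K. \<phi> k j *\<^sub>R (real \<circ> (c(i := c i + 1))) (k,j))
       = (\<Sum>(k,j)\<in>IK K. \<phi> k j *\<^sub>R (real \<circ> c) (k,j)) + (case i of (k,j) \<Rightarrow> \<phi> k j)"
proof -
  have "(\<Sum>(k,j)\<in>IK K. \<phi> k j *\<^sub>R (real \<circ> (c(i := c i + 1))) (k,j))
      = (\<Sum>x\<in>IK K. (case x of (k,j) \<Rightarrow> \<phi> k j * real (c x)) + (if x = i then (case i of (k,j) \<Rightarrow> \<phi> k j) else 0))"
    by (intro sum.cong) (auto simp: algebra_simps)
  also have "\<dots> = (\<Sum>(k,j)\<in>IK K. \<phi> k j *\<^sub>R (real \<circ> c) (k,j)) + (case i of (k,j) \<Rightarrow> \<phi> k j)"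
    using assms finite_IK[of K] by (simp add: sum.distrib case_prod_unfold)
  finally show ?thesis .
qed

lemma support_multinom:
  assumes "H1 \<mu> K"
  shows "set_pmf (multinom \<mu> K h) \<subseteq> NI K h"
proof (induction h)
  case 0 thus ?case by (auto simp: NI_def)
next
  case (Suc h)
  show ?case
  proof
    fix c assume "c \<in> set_pmf (multinom \<mu> K (Suc h))"
    then obtain c' i where c': "c' \<in> set_pmf (multinom \<mu> K h)" and i: "i \<in> IK K"
      and c: "c = c'(i := c' i + 1)"
      using set_cat[OF assms] by auto
    from c' Suc.IH have "c' \<in> NI K h" by auto
    hence z: "\<forall>x. x \<notin> IK K \<longrightarrow> c' x = 0" and sh: "(\<Sum>x\<in>IK K. c' x) = h" by (auto simp: NI_def)
    have "(\<Sum>x\<in>IK K. c x) = (\<Sum>x\<in>IK K. c' x + (if x = i then 1 else 0))"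
      unfolding c by (intro sum.cong) auto
    also have "\<dots> = Suc h" using i finite_IK[of K] sh by (simp add: sum.distrib)
    finally show "c \<in> NI K (Suc h)" using z i unfolding NI_def c by auto
  qed
qed

lemma expect_cat:
  assumes "H1 \<mu> K" and \<phi>: "\<And>k. (\<Sum>j=1..k. \<phi> k j) = real k * (real k - 1) / 2"
  shows "(\<integral>x. (case x of (k,j) \<Rightarrow> \<phi> k j) \<partial>measure_pmf (cat_IK \<mu> K)) = sigma2 \<mu> K / 2"
proof -
  have "(\<integral>x. (case x of (k,j) \<Rightarrow> \<phi> k j) \<partial>measure_pmf (cat_IK \<mu> K))
      = (\<Sum>x\<in>IK K. (case x of (k,j) \<Rightarrow> \<phi> k j) * pmf (cat_IK \<mu> K) x)"
    by (rule integral_measure_pmf_real) (use set_cat[OF assms(1)] finite_IK in auto)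
  also have "\<dots> = (\<Sum>(k,j)\<in>IK K. \<phi> k j * \<mu> k)"
    by (intro sum.cong) (auto simp: pmf_cat[OF assms(1)])
  also have "\<dots> = (\<Sum>k=1..K. \<Sum>j=1..k. \<phi> k j * \<mu> k)" by (simp add: sum_IK)
  also have "\<dots> = (\<Sum>k=1..K. real k * (real k - 1) / 2 * \<mu> k)"
    by (intro sum.cong refl) (simp only: sum_distrib_right[symmetric] \<phi>)
  also have "\<dots> = (\<Sum>k\<le>K. real k * (real k - 1) / 2 * \<mu> k)"
    by (rule sum.mono_neutral_left) auto
  also have "\<dots> = (\<Sum>k\<le>K. (real k - 1)^2 * \<mu> k / 2 + (real k * \<mu> k - \<mu> k) / 2)"
    by (intro sum.cong) (auto simp: field_simps power2_eq_square)
  also have "\<dots> = sigma2 \<mu> K / 2 + ((\<Sum>k\<le>K. real k * \<mu> k) - (\<Sum>k\<le>K. \<mu> k)) / 2"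
    by (simp add: sum.distrib sum_subtractf sum_divide_distrib[symmetric] sigma2_def)
  also have "\<dots> = sigma2 \<mu> K / 2" using assms(1) by (simp add: H1_def)
  finally show ?thesis .
qed

lemma tail_stat:
  assumes H: "H1 \<mu> K"
    and bnd: "\<And>k j. (k,j) \<in> IK K \<Longrightarrow> \<psi> k j \<in> {a..a + real K}"
    and h: "h > 0" and eps: "\<epsilon> > 0"
  shows "measure_pmf.prob (multinom \<mu> K h)
           {c. (\<Sum>(k,j)\<in>IK K. \<psi> k j *\<^sub>R (real \<circ> c) (k,j))
                 \<ge> real h * (\<integral>x. (case x of (k,j) \<Rightarrow> \<psi> k j) \<partial>measure_pmf (cat_IK \<mu> K)) + \<epsilon>}
         \<le> exp (-2 * \<epsilon>\<^sup>2 / (real h * (real K)\<^sup>2))"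
proof -
  have K: "K > 0" using H by (simp add: H1_def)
  have "measure_pmf.prob (multinom \<mu> K h)
           {c. (\<Sum>(k,j)\<in>IK K. \<psi> k j *\<^sub>R (real \<circ> c) (k,j))
                 \<ge> real h * (\<integral>x. (case x of (k,j) \<Rightarrow> \<psi> k j) \<partial>measure_pmf (cat_IK \<mu> K)) + \<epsilon>}
         \<le> exp (-2 * \<epsilon>\<^sup>2 / (real h * (a + real K - a)\<^sup>2))"
  proof (rule tail_bound[where Q = "multinom \<mu> K" and upd = "\<lambda>c i. c(i := c i + 1)" and cz = "\<lambda>_. 0"])
    fix c :: "nat \<times> nat \<Rightarrow> nat" and i assume "i \<in> set_pmf (cat_IK \<mu> K)"
    hence i: "i \<in> IK K" using set_cat[OF H] by auto
    show "(\<Sum>(k,j)\<in>IK K. \<psi> k j *\<^sub>R (real \<circ> (c(i := c i + 1))) (k,j)) =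
          (\<Sum>(k,j)\<in>IK K. \<psi> k j *\<^sub>R (real \<circ> c) (k,j)) + (case i of (k,j) \<Rightarrow> \<psi> k j)"
      by (rule sum_upd[OF i])
  next
    fix i assume "i \<in> set_pmf (cat_IK \<mu> K)"
    hence i: "i \<in> IK K" using set_cat[OF H] by auto
    thus "(case i of (k,j) \<Rightarrow> \<psi> k j) \<in> {a..a + real K}" using bnd by (cases i) auto
  qed (use K h eps in auto)
  thus ?thesis by simp
qed

theorem lemma9:
  fixes \<mu> :: "nat \<Rightarrow> real" and K :: nat
  assumes "H1 \<mu> K"
  shows "(\<forall>h\<ge>1. map_pmf (\<lambda>c. N1 K (real \<circ> c)) (multinom \<mu> K h)
                  = map_pmf (\<lambda>c. N2 K (real \<circ> c)) (multinom \<mu> K h))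
       \<and> (\<exists>c1>0. \<exists>c2>0. \<forall>h\<ge>1.
            measure_pmf.prob (multinom \<mu> K h) {c. c \<notin> J \<mu> K h}
              \<le> c1 * exp (- c2 * real h powr (1/3)))"
proof (intro conjI allI impI)
  fix h :: nat
  show "map_pmf (\<lambda>c. N1 K (real \<circ> c)) (multinom \<mu> K h)
                  = map_pmf (\<lambda>c. N2 K (real \<circ> c)) (multinom \<mu> K h)"
    by (rule law_eq[OF assms])
next
  have K: "K > 0" using assms by (simp add: H1_def)
  define c2 where "c2 = 2 / (real K)\<^sup>2"
  have c2: "c2 > 0" using K by (simp add: c2_def)
  have main: "\<forall>h\<ge>1.
            measure_pmf.prob (multinom \<mu> K h) {c. c \<notin> J \<mu> K h}
              \<le> 4 * exp (- c2 * real h powr (1/3))"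
  proof (intro allI impI)
    fix h :: nat assume "h \<ge> 1"
    hence h: "h > 0" by simp
    define \<epsilon> where "\<epsilon> = real h powr (2/3)"
    have eps: "\<epsilon> > 0" using h by (simp add: \<epsilon>_def)
    define m where "m = sigma2 \<mu> K / 2"
    define B where "B = exp (- c2 * real h powr (1/3))"
    have "\<epsilon>\<^sup>2 = real h powr (2/3) * real h powr (2/3)" by (simp add: \<epsilon>_def power2_eq_square)
    also have "\<dots> = real h powr (2/3 + 2/3)" by (rule powr_add[symmetric])
    also have "\<dots> = real h powr (1 + 1/3)" by simp
    also have "\<dots> = real h powr 1 * real h powr (1/3)" by (rule powr_add)
    also have "\<dots> = real h * real h powr (1/3)" by simp
    finally have e2: "\<epsilon>\<^sup>2 = real h * real h powr (1/3)" .
    have EB: "exp (-2 * \<epsilon>\<^sup>2 / (real h * (real K)\<^sup>2)) = B"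
      unfolding B_def c2_def e2 using h by (simp add: field_simps)
    define F1 where "F1 = (\<lambda>(k::nat) (j::nat). real j - 1)"
    define F2 where "F2 = (\<lambda>(k::nat) (j::nat). real k - real j)"
    have s1: "\<And>k. (\<Sum>j=1..k. F1 k j) = real k * (real k - 1) / 2" unfolding F1_def by (rule sumj1)
    have s2: "\<And>k. (\<Sum>j=1..k. F2 k j) = real k * (real k - 1) / 2" unfolding F2_def by (rule sumj2)
    have E1: "(\<integral>x. (case x of (k,j) \<Rightarrow> F1 k j) \<partial>measure_pmf (cat_IK \<mu> K)) = m"
      unfolding m_def by (rule expect_cat[OF assms s1])
    have E2: "(\<integral>x. (case x of (k,j) \<Rightarrow> F2 k j) \<partial>measure_pmf (cat_IK \<mu> K)) = m"
      unfolding m_def by (rule expect_cat[OF assms s2])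
    have E1': "(\<integral>x. (case x of (k,j) \<Rightarrow> - F1 k j) \<partial>measure_pmf (cat_IK \<mu> K)) = - m"
      using E1 by (simp add: case_prod_unfold)
    have E2': "(\<integral>x. (case x of (k,j) \<Rightarrow> - F2 k j) \<partial>measure_pmf (cat_IK \<mu> K)) = - m"
      using E2 by (simp add: case_prod_unfold)
    have N1e: "\<And>c. N1 K (real \<circ> c) = (\<Sum>(k,j)\<in>IK K. F1 k j *\<^sub>R (real \<circ> c) (k,j))"
      by (simp add: N1_def F1_def)
    have N2e: "\<And>c. N2 K (real \<circ> c) = (\<Sum>(k,j)\<in>IK K. F2 k j *\<^sub>R (real \<circ> c) (k,j))"
      by (simp add: N2_def F2_def)
    have N1e': "\<And>c. - N1 K (real \<circ> c) = (\<Sum>(k,j)\<in>IK K. (- F1 k j) *\<^sub>R (real \<circ> c) (k,j))"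
      by (simp add: N1e sum_negf[symmetric] case_prod_unfold)
    have N2e': "\<And>c. - N2 K (real \<circ> c) = (\<Sum>(k,j)\<in>IK K. (- F2 k j) *\<^sub>R (real \<circ> c) (k,j))"
      by (simp add: N2e sum_negf[symmetric] case_prod_unfold)
    define A1 where "A1 = {c. N1 K (real \<circ> c) \<ge> real h * m + \<epsilon>}"
    define A2 where "A2 = {c. - N1 K (real \<circ> c) \<ge> real h * (- m) + \<epsilon>}"
    define A3 where "A3 = {c. N2 K (real \<circ> c) \<ge> real h * m + \<epsilon>}"
    define A4 where "A4 = {c. - N2 K (real \<circ> c) \<ge> real h * (- m) + \<epsilon>}"
    let ?P = "measure_pmf.prob (multinom \<mu> K h)"
    have P1: "?P A1 \<le> B" unfolding A1_def N1e EB[symmetric] E1[symmetric]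
      by (rule tail_stat[OF assms _ h eps, where a = 0]) (auto simp: F1_def IK_def)
    have P2: "?P A2 \<le> B" unfolding A2_def N1e' EB[symmetric] E1'[symmetric]
      by (rule tail_stat[OF assms _ h eps, where a = "- real K"]) (auto simp: F1_def IK_def)
    have P3: "?P A3 \<le> B" unfolding A3_def N2e EB[symmetric] E2[symmetric]
      by (rule tail_stat[OF assms _ h eps, where a = 0]) (auto simp: F2_def IK_def)
    have P4: "?P A4 \<le> B" unfolding A4_def N2e' EB[symmetric] E2'[symmetric]
      by (rule tail_stat[OF assms _ h eps, where a = "- real K"]) (auto simp: F2_def IK_def)
    have sub: "{c. c \<notin> J \<mu> K h} \<inter> set_pmf (multinom \<mu> K h) \<subseteq> A1 \<union> A2 \<union> A3 \<union> A4"
    proof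
      fix c assume "c \<in> {c. c \<notin> J \<mu> K h} \<inter> set_pmf (multinom \<mu> K h)"
      hence "c \<notin> J \<mu> K h" "c \<in> NI K h" using support_multinom[OF assms] by auto
      thus "c \<in> A1 \<union> A2 \<union> A3 \<union> A4"
        unfolding J_def A1_def A2_def A3_def A4_def Let_def m_def \<epsilon>_def by (auto simp: algebra_simps)
    qed
    have "?P {c. c \<notin> J \<mu> K h} = ?P ({c. c \<notin> J \<mu> K h} \<inter> set_pmf (multinom \<mu> K h))"
      by (simp add: measure_Int_set_pmf)
    also have "\<dots> \<le> ?P (A1 \<union> A2 \<union> A3 \<union> A4)"
      by (rule measure_pmf.finite_measure_mono[OF sub]) simp
    also have "\<dots> \<le> ?P (A1 \<union> A2 \<union> A3) + ?P A4"
      by (rule measure_Un_le) auto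
    finally have u1: "?P {c. c \<notin> J \<mu> K h} \<le> ?P (A1 \<union> A2 \<union> A3) + ?P A4" .
    have u2: "?P (A1 \<union> A2 \<union> A3) \<le> ?P (A1 \<union> A2) + ?P A3"
      by (rule measure_Un_le) auto
    have u3: "?P (A1 \<union> A2) \<le> ?P A1 + ?P A2"
      by (rule measure_Un_le) auto
    from u1 u2 u3 show "?P {c. c \<notin> J \<mu> K h} \<le> 4 * exp (- c2 * real h powr (1/3))"
      using P1 P2 P3 P4 unfolding B_def by linarith
  qed
  show "\<exists>c1>0. \<exists>c2>0. \<forall>h\<ge>1.
            measure_pmf.prob (multinom \<mu> K h) {c. c \<notin> J \<mu> K h}
              \<le> c1 * exp (- c2 * real h powr (1/3))"
    using main c2 by (intro exI[of _ "4::real"] exI[of _ c2]) auto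
qed

end
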